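(* Let $(X,\beta,m)$ be a non-atomic standard probability space, $\tau$ an ergodic invertible measure-preserving map of $X$, and $(\epsilon_n)_{n\ge1}$ a sequence decreasing to $0$ with $0<\epsilon_n\le1$ for all $n$. Then there is a decreasing sequence $(B_n)_{n\ge1}$ of measurable sets with $\lim_n m(B_n)=0$ and $m(B_n)\ge\epsilon_n$ for all $n$, which is an a.e. invisible measure-theoretic shrinking target for $\tau$: for a.e. $x\in X$, $\tau^n(x)\in B_n$ for only finitely many $n$.
   Context: A measure-theoretic shrinking target is a decreasing sequence of measurable sets $(B_n)$ with $m(B_n)\to0$. *)

theory Defs
  imports "HOL-Probability.Probability"
begin

definition nonatomic :: "'a measure \<Rightarrow> bool" where
  "nonatomic M \<longleftrightarrow> (\<forall>A\<in>sets M. emeasure M A > 0 \<longrightarrow>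
      (\<exists>B\<in>sets M. B \<subseteq> A \<and> 0 < emeasure M B \<and> emeasure M B < emeasure M A))"

definition standard_prob_space :: "('a::polish_space) measure \<Rightarrow> bool" where
  "standard_prob_space M \<longleftrightarrow> prob_space M \<and> sets M = sets borel"

definition mpt :: "'a measure \<Rightarrow> ('a \<Rightarrow> 'a) \<Rightarrow> bool" where
  "mpt M T \<longleftrightarrow> T \<in> M \<rightarrow>\<^sub>M M \<and> distr M M T = M"

definition invertible_mpt :: "'a measure \<Rightarrow> ('a \<Rightarrow> 'a) \<Rightarrow> bool" where
  "invertible_mpt M T \<longleftrightarrow> mpt M T \<and> bij_betw T (space M) (space M)
     \<and> mpt M (the_inv_into (space M) T)"

definition ergodic :: "'a measure \<Rightarrow> ('a \<Rightarrow> 'a) \<Rightarrow> bool" where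
  "ergodic M T \<longleftrightarrow> (\<forall>A\<in>sets M. T -` A \<inter> space M = A \<longrightarrow>
      measure M A = 0 \<or> measure M A = 1)"

end

theory Submission
  imports Defs
begin

lemma iter_pres:
  assumes f: "f \<in> M \<rightarrow>\<^sub>M M" and p: "distr M M f = M"
  shows "distr M M (f^^n) = M"
proof (induction n)
  case 0 then show ?case by (simp add: id_def)
next
  case (Suc n)
  have "distr M M (f^^Suc n) = distr (distr M M (f^^n)) M f"
    using distr_distr[OF f measurable_compose_n[OF f, of n]] by simp
  also have "\<dots> = M" using Suc p by simp
  finally show ?case .
qed

lemma iter_measure:
  assumes f: "f \<in> M \<rightarrow>\<^sub>M M" and p: "distr M M f = M" and A: "A \<in> sets M"
  shows "measure M ((f^^n) -` A \<inter> space M) = measure M A"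
  using measure_distr[OF measurable_compose_n[OF f, of n] , of A] A iter_pres[OF f p, of n] by simp

lemma small_sets:
  assumes P: "prob_space M" and na: "nonatomic M" and d: "d > 0"
  shows "\<exists>A\<in>sets M. 0 < measure M A \<and> measure M A \<le> d"
proof -
  interpret prob_space M by fact
  have halving: "\<exists>A\<in>sets M. 0 < measure M A \<and> measure M A \<le> (1/2)^k" for k
  proof (induction k)
    case 0 show ?case by (intro bexI[of _ "space M"]) (auto simp: prob_space)
  next
    case (Suc k)
    then obtain A where A: "A \<in> sets M" "0 < measure M A" "measure M A \<le> (1/2)^k" by auto
    have "emeasure M A > 0" using A by (simp add: emeasure_eq_measure)
    then obtain B where B: "B \<in> sets M" "B \<subseteq> A" "0 < emeasure M B" "emeasure M B < emeasure M A"
      using na A(1) unfolding nonatomic_def by blast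
    have B': "0 < measure M B" "measure M B < measure M A" using B by (simp_all add: emeasure_eq_measure ennreal_less_iff)
    show ?case
    proof (cases "measure M B \<le> measure M A / 2")
      case True
      have "measure M B \<le> (1/2)^Suc k" using True A(3) by simp
      then show ?thesis using B(1) B'(1) by blast
    next
      case False
      have "measure M (A - B) = measure M A - measure M B"
        using finite_measure_Diff[OF A(1) B(1) B(2)] .
      moreover have "A - B \<in> sets M" using A(1) B(1) by blast
      moreover have "measure M A - measure M B \<le> (1/2)^Suc k" using False A(3) by simp
      moreover have "0 < measure M A - measure M B" using B'(2) by simp
      ultimately show ?thesis by (metis (no_types, lifting))
    qed
  qed
  obtain k where k: "(1/2::real)^k < d" using real_arch_pow_inv[OF d, of "1/2"] by auto
  obtain A where "A \<in> sets M" "0 < measure M A" "measure M A \<le> (1/2)^k" using halving[of k] by blast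
  then show ?thesis using k by (intro bexI[of _ A]) auto
qed


locale erg = prob_space M for M :: "'a measure" + fixes T :: "'a \<Rightarrow> 'a"
  assumes spU: "space M = UNIV" and Tm: "T \<in> M \<rightarrow>\<^sub>M M" and Tp: "distr M M T = M"
  and erg: "ergodic M T"
begin

definition Stay :: "'a set \<Rightarrow> nat \<Rightarrow> 'a set" where
  "Stay A m = {x. \<forall>j\<le>m. (T^^j) x \<notin> A}"

lemma pre_sets: "A \<in> sets M \<Longrightarrow> (T^^n) -` A \<in> sets M"
  using measurable_sets[OF measurable_compose_n[OF Tm, of n], of A] spU by simp

lemma pre_meas: "A \<in> sets M \<Longrightarrow> measure M ((T^^n) -` A) = measure M A"
  using iter_measure[OF Tm Tp, of A n] spU by simp

lemma Stay_sets: assumes A: "A \<in> sets M" shows "Stay A m \<in> sets M"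
proof -
  have "Stay A m = (\<Inter>j\<in>{..m}. (T^^j) -` (UNIV - A))" unfolding Stay_def by auto
  moreover have "UNIV - A \<in> sets M" using A spU by (metis sets.compl_sets)
  ultimately show ?thesis using pre_sets by auto
qed

lemma Stay_mono: "m \<le> m' \<Longrightarrow> Stay A m' \<subseteq> Stay A m"
  unfolding Stay_def by auto

lemma Tshift: "(T^^j) (T x) = (T^^Suc j) x"
  by (simp only: funpow_Suc_right comp_def)

lemma Stay_T: "x \<in> Stay A (Suc m) \<Longrightarrow> T x \<in> Stay A m"
proof -
  assume x: "x \<in> Stay A (Suc m)"
  { fix j assume "j \<le> m"
    then have "(T^^Suc j) x \<notin> A" using x unfolding Stay_def by auto
    then have "(T^^j) (T x) \<notin> A" unfolding Tshift . }
  then show ?thesis unfolding Stay_def by auto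
qed

lemma Stay_step: assumes A: "A \<in> sets M"
  shows "measure M (Stay A m) \<le> measure M (Stay A (Suc m)) + measure M A"
proof -
  have "Stay A m \<subseteq> Stay A (Suc m) \<union> (T^^Suc m) -` A"
    unfolding Stay_def using le_Suc_eq by auto
  then have "measure M (Stay A m) \<le> measure M (Stay A (Suc m) \<union> (T^^Suc m) -` A)"
    using sets.Un[OF Stay_sets[OF A] pre_sets[OF A, of "Suc m"]] by (intro finite_measure_mono) auto
  also have "\<dots> \<le> measure M (Stay A (Suc m)) + measure M ((T^^Suc m) -` A)"
    using Stay_sets[OF A] pre_sets[OF A, of "Suc m"] by (rule measure_Un_le)
  finally show ?thesis using pre_meas[OF A, of "Suc m"] by (simp del: funpow.simps)
qed

lemma Stay_steps: assumes A: "A \<in> sets M"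
  shows "measure M (Stay A m) \<le> measure M (Stay A (m + n)) + n * measure M A"
proof (induction n)
  case 0 then show ?case by simp
next
  case (Suc n)
  then show ?case using Stay_step[OF A, of "m+n"] by (simp add: algebra_simps)
qed


lemma Stay_null: assumes A: "A \<in> sets M" and pos: "measure M A > 0"
  shows "(\<lambda>m. measure M (Stay A m)) \<longlonglongrightarrow> 0" and "AE x in M. \<exists>m. x \<notin> Stay A m"
proof -
  define V where "V m = (\<Union>j. (T^^(j+m)) -` A)" for m
  have Vs: "V m \<in> sets M" for m unfolding V_def using pre_sets[OF A] by auto
  have Vshift: "V m = (T^^m) -` V 0" for m
    unfolding V_def by (auto simp: funpow_add)
  have Vmeas: "measure M (V m) = measure M (V 0)" for m
    using pre_meas[OF Vs[of 0], of m] Vshift[of m] by simp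
  have Vdec: "decseq V"
  proof (rule decseq_SucI)
    fix m show "V (Suc m) \<subseteq> V m"
    proof
      fix x assume "x \<in> V (Suc m)"
      then obtain j where "(T^^(j + Suc m)) x \<in> A" unfolding V_def by auto
      then have "(T^^(Suc j + m)) x \<in> A" by simp
      then show "x \<in> V m" unfolding V_def by blast
    qed
  qed
  define U where "U = (\<Inter>m. V m)"
  have Us: "U \<in> sets M" unfolding U_def using Vs by auto
  have "(\<lambda>m. measure M (V m)) \<longlonglongrightarrow> measure M U"
    unfolding U_def using Vs Vdec by (intro finite_Lim_measure_decseq) auto
  moreover have eqV: "(\<lambda>m. measure M (V m)) = (\<lambda>m. measure M (V 0))" by (rule ext) (rule Vmeas)
  ultimately have "(\<lambda>m. measure M (V 0)) \<longlonglongrightarrow> measure M U" by (rule back_subst)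
  then have "measure M (V 0) = measure M U" by (rule LIMSEQ_unique[OF tendsto_const])
  then have UV: "measure M U = measure M (V 0)" by (rule sym)
  have AV: "A \<subseteq> V 0"
  proof
    fix x assume "x \<in> A"
    then have "(T^^(0+0)) x \<in> A" by simp
    then show "x \<in> V 0" unfolding V_def by blast
  qed
  have "measure M A \<le> measure M (V 0)" using finite_measure_mono[OF AV Vs] .
  then have Upos: "measure M U \<noteq> 0" using pos UV by simp
  have Uinv: "T -` U \<inter> space M = U"
  proof -
    have "x \<in> T -` U \<longleftrightarrow> x \<in> U" for x
    proof
      assume "x \<in> T -` U"
      then have h: "\<forall>m. \<exists>j. (T^^(j+m)) (T x) \<in> A" unfolding U_def V_def by auto
      show "x \<in> U" unfolding U_def V_def
      proof (intro InterI, clarify)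
        fix m
        obtain j where "(T^^(j+m)) (T x) \<in> A" using h by blast
        then have "(T^^(Suc j + m)) x \<in> A" by (simp only: Tshift) simp
        then show "x \<in> (\<Union>j. (T^^(j+m)) -` A)" by blast
      qed
    next
      assume "x \<in> U"
      then have h: "\<forall>m. \<exists>j. (T^^(j+m)) x \<in> A" unfolding U_def V_def by auto
      show "x \<in> T -` U" unfolding U_def V_def
      proof (simp, intro allI)
        fix m
        obtain j where "(T^^(j+Suc m)) x \<in> A" using h by blast
        then have "(T^^(j+m)) (T x) \<in> A" by (simp add: Tshift)
        then show "\<exists>j. (T^^(j+m)) (T x) \<in> A" by blast
      qed
    qed
    then show ?thesis using spU by auto
  qed
  have "measure M U = 1" using erg Us Uinv Upos unfolding ergodic_def by blast
  then have V1: "measure M (V 0) = 1" using UV by simp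
  have SI: "(\<Inter>m. Stay A m) = UNIV - V 0" unfolding Stay_def V_def by auto
  have "measure M (UNIV - V 0) = 0" using prob_compl[OF Vs[of 0]] V1 spU by simp
  moreover have "(\<lambda>m. measure M (Stay A m)) \<longlonglongrightarrow> measure M (\<Inter>m. Stay A m)"
    using Stay_sets[OF A] Stay_mono by (intro finite_Lim_measure_decseq) (auto simp: decseq_def)
  ultimately show "(\<lambda>m. measure M (Stay A m)) \<longlonglongrightarrow> 0" using SI by simp
  have "AE x in M. x \<in> V 0" using AE_in_set_eq_1[OF Vs[of 0]] V1 by simp
  then show "AE x in M. \<exists>m. x \<notin> Stay A m"
  proof (rule AE_mp, intro AE_I2 impI)
    fix x assume "x \<in> V 0"
    then obtain j where "(T^^j) x \<in> A" unfolding V_def by auto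
    then show "\<exists>m. x \<notin> Stay A m" unfolding Stay_def by auto
  qed
qed


lemma choose_k: assumes A: "A \<in> sets M" and pos: "0 < measure M A" and c: "0 < c" "c \<le> 1 - measure M A"
  shows "\<exists>k. c \<le> measure M (Stay A k) \<and> measure M (Stay A k) < c + measure M A"
proof -
  have S0: "Stay A 0 = space M - A" unfolding Stay_def using spU by auto
  have p0: "measure M (Stay A 0) = 1 - measure M A" using prob_compl[OF A] S0 by simp
  have "eventually (\<lambda>m. measure M (Stay A m) < c) sequentially"
    using order_tendstoD(2)[OF Stay_null(1)[OF A pos] c(1)] .
  then obtain m where m: "measure M (Stay A m) < c" by (auto simp: eventually_sequentially)
  define m0 where "m0 = (LEAST m. measure M (Stay A m) < c)"
  have m0: "measure M (Stay A m0) < c" unfolding m0_def using m by (rule LeastI)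
  have "m0 \<noteq> 0"
  proof
    assume "m0 = 0" then show False using m0 p0 c by simp
  qed
  then obtain k where k: "m0 = Suc k" using not0_implies_Suc by blast
  have "\<not> measure M (Stay A k) < c" using not_less_Least[of k "\<lambda>m. measure M (Stay A m) < c"] k m0_def by simp
  moreover have "measure M (Stay A k) < c + measure M A" using Stay_step[OF A, of k] m0 k by simp
  ultimately show ?thesis by (meson not_less)
qed

end

theorem mainTheorem8:
  fixes M :: "('a::polish_space) measure" and T :: "'a \<Rightarrow> 'a" and \<epsilon> :: "nat \<Rightarrow> real"
  assumes "standard_prob_space M" and "nonatomic M"
    and "invertible_mpt M T" and "ergodic M T"
    and "\<forall>n\<ge>1. \<epsilon> (Suc n) \<le> \<epsilon> n" and "\<epsilon> \<longlonglongrightarrow> 0"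
    and "\<forall>n\<ge>1. 0 < \<epsilon> n \<and> \<epsilon> n \<le> 1"
  shows "\<exists>B :: nat \<Rightarrow> 'a set.
           (\<forall>n\<ge>1. B n \<in> sets M) \<and>
           (\<forall>n\<ge>1. B (Suc n) \<subseteq> B n) \<and>
           (\<lambda>n. measure M (B n)) \<longlonglongrightarrow> 0 \<and>
           (\<forall>n\<ge>1. measure M (B n) \<ge> \<epsilon> n) \<and>
           (AE x in M. finite {n. n \<ge> 1 \<and> (T ^^ n) x \<in> B n})"
proof -
  have P: "prob_space M" and sB: "sets M = sets borel"
    using assms(1) unfolding standard_prob_space_def by auto
  interpret prob_space M by fact
  have spU: "space M = UNIV" using sets_eq_imp_space_eq[OF sB] by simp
  have mT: "mpt M T" and bT: "bij_betw T UNIV UNIV" and mS: "mpt M (the_inv_into UNIV T)"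
    using assms(3) spU unfolding invertible_mpt_def by auto
  define S where "S = the_inv_into UNIV T"
  have Tm: "T \<in> M \<rightarrow>\<^sub>M M" and Tp: "distr M M T = M" using mT unfolding mpt_def by auto
  have Sm: "S \<in> M \<rightarrow>\<^sub>M M" and Sp: "distr M M S = M" using mS unfolding mpt_def S_def by auto
  interpret E: erg M T by unfold_locales (fact spU Tm Tp assms(4))+
  have injT: "inj_on T UNIV" using bT by (rule bij_betw_imp_inj_on)
  have ST: "S (T x) = x" for x unfolding S_def using the_inv_into_f_f[OF injT] by simp
  have TS: "T (S y) = y" for y unfolding S_def using f_the_inv_into_f[OF injT] bT
    by (simp add: bij_betw_imp_surj_on)
  have SnTn: "(S^^n) ((T^^n) x) = x" for n x
  proof (induction n)
    case 0 then show ?case by simp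
  next
    case (Suc n)
    have "(S^^Suc n) ((T^^Suc n) x) = (S^^n) (S ((T^^Suc n) x))" by (simp only: funpow_Suc_right comp_def)
    also have "(T^^Suc n) x = T ((T^^n) x)" by simp
    finally show ?case using Suc ST by simp
  qed
  have Spre_sets: "X \<in> sets M \<Longrightarrow> (S^^n) -` X \<in> sets M" for X n
    using measurable_sets[OF measurable_compose_n[OF Sm, of n], of X] spU by simp
  have Spre_meas: "X \<in> sets M \<Longrightarrow> measure M ((S^^n) -` X) = measure M X" for X n
    using iter_measure[OF Sm Sp, of X n] spU by simp
  have epos: "\<And>n. n \<ge> 1 \<Longrightarrow> 0 < \<epsilon> n \<and> \<epsilon> n \<le> 1" using assms(7) by auto
  have "eventually (\<lambda>n. \<epsilon> n < 1/2) sequentially"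
    using order_tendstoD(2)[OF assms(6), of "1/2"] by simp
  then obtain N1 where N1: "\<And>n. n \<ge> N1 \<Longrightarrow> \<epsilon> n < 1/2" by (auto simp: eventually_sequentially)
  define N0 where "N0 = Suc N1"
  have N0: "\<And>n. n \<ge> N0 \<Longrightarrow> \<epsilon> n \<le> 1/2" "N0 \<ge> 1" using N1 unfolding N0_def by (auto simp: less_imp_le)
  define q where "q i = (1/2::real)^(i+2)" for i
  have qpos: "q i > 0" for i unfolding q_def by simp
  have "\<forall>i. \<exists>L. \<forall>n\<ge>L. \<epsilon> n \<le> q i"
  proof
    fix i
    have "eventually (\<lambda>n. \<epsilon> n < q i) sequentially"
      using order_tendstoD(2)[OF assms(6) qpos[of i]] .
    then show "\<exists>L. \<forall>n\<ge>L. \<epsilon> n \<le> q i" by (meson eventually_sequentially less_imp_le)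
  qed
  then obtain L where L: "\<And>i n. n \<ge> L i \<Longrightarrow> \<epsilon> n \<le> q i" by metis
  define \<delta> where "\<delta> i = q i / (real (L i) + 1)" for i
  have dpos: "\<delta> i > 0" for i unfolding \<delta>_def using qpos by simp
  have dle: "\<delta> i \<le> q i" for i unfolding \<delta>_def using qpos[of i] by (simp add: field_simps)
  have qle: "q i \<le> 1/4" for i unfolding q_def by (simp add: power_le_one)
  have "\<forall>i. \<exists>A\<in>sets M. 0 < measure M A \<and> measure M A \<le> \<delta> i"
    using small_sets[OF P assms(2) dpos] by blast
  then obtain A where A: "\<And>i. A i \<in> sets M" "\<And>i. 0 < measure M (A i)" "\<And>i. measure M (A i) \<le> \<delta> i"
    by metis
  have "\<forall>i. \<exists>k. 3 * q i \<le> measure M (E.Stay (A i) k) \<and> measure M (E.Stay (A i) k) < 3 * q i + measure M (A i)"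
  proof
    fix i
    have "3 * q i \<le> 1 - measure M (A i)" using qle[of i] dle[of i] A(3)[of i] by linarith
    then show "\<exists>k. 3 * q i \<le> measure M (E.Stay (A i) k) \<and> measure M (E.Stay (A i) k) < 3 * q i + measure M (A i)"
      using E.choose_k[OF A(1) A(2), of "3 * q i"] qpos[of i] by simp
  qed
  then obtain k where k: "\<And>i. 3 * q i \<le> measure M (E.Stay (A i) (k i))"
    "\<And>i. measure M (E.Stay (A i) (k i)) < 3 * q i + measure M (A i)" by metis
  define p where "p i n = measure M (E.Stay (A i) (k i + n))" for i n
  have p_le: "p i n \<le> 4 * q i" for i n
  proof -
    have "p i n \<le> measure M (E.Stay (A i) (k i))" unfolding p_def
      using E.Stay_sets[OF A(1)] E.Stay_mono[of "k i" "k i + n"] by (intro finite_measure_mono) auto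
    then show ?thesis using k(2)[of i] A(3)[of i] dle[of i] by linarith
  qed
  have p_nonneg: "p i n \<ge> 0" for i n unfolding p_def by simp
  have sumq: "summable (\<lambda>i. 4 * q i)"
    unfolding q_def by (intro summable_mult) (simp add: power_add summable_geometric)
  define Bi where "Bi i n = (S^^n) -` E.Stay (A i) (k i + n)" for i n
  have Bi_sets: "Bi i n \<in> sets M" for i n unfolding Bi_def using Spre_sets E.Stay_sets[OF A(1)] by auto
  have Bi_meas: "measure M (Bi i n) = p i n" for i n unfolding Bi_def p_def
    using Spre_meas E.Stay_sets[OF A(1)] by auto
  have Bi_dec: "Bi i (Suc n) \<subseteq> Bi i n" for i n
  proof
    fix x assume "x \<in> Bi i (Suc n)"
    then have "(S^^Suc n) x \<in> E.Stay (A i) (Suc (k i + n))" unfolding Bi_def by simp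
    then have "T ((S^^Suc n) x) \<in> E.Stay (A i) (k i + n)" by (rule E.Stay_T)
    moreover have "T ((S^^Suc n) x) = (S^^n) x" using TS by simp
    ultimately show "x \<in> Bi i n" unfolding Bi_def by simp
  qed
  define B where "B n = (if n < N0 then UNIV else (\<Union>i. Bi i n))" for n
  have B_sets: "B n \<in> sets M" for n
    unfolding B_def using Bi_sets spU by (auto intro: sets.top[of M, simplified spU])
  have B_dec: "B (Suc n) \<subseteq> B n" for n
    unfolding B_def using Bi_dec by auto
  have B_le: "measure M (B n) \<le> (\<Sum>i. p i n)" if "n \<ge> N0" for n
  proof -
    have "summable (\<lambda>i. measure M (Bi i n))"
      using sumq by (rule summable_comparison_test') (use Bi_meas p_le p_nonneg in auto)
    then have "measure M (\<Union>i. Bi i n) \<le> (\<Sum>i. measure M (Bi i n))"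
      using Bi_sets by (intro finite_measure_subadditive_countably) auto
    then show ?thesis using that unfolding B_def Bi_meas by simp
  qed
  have lim: "(\<lambda>n. measure M (B n)) \<longlonglongrightarrow> 0"
  proof -
    have pl: "(\<lambda>n. p i n) \<longlonglongrightarrow> 0" for i
      using LIMSEQ_ignore_initial_segment[OF E.Stay_null(1)[OF A(1)[of i] A(2)[of i]], of "k i"]
      unfolding p_def by (simp add: add.commute)
    have "((\<lambda>n. \<Sum>i. p i n) \<longlongrightarrow> (\<Sum>i. (0::real))) sequentially"
      using tannerys_theorem[where a=p and b="\<lambda>_. 0" and M="\<lambda>i. 4 * q i" and F=sequentially,
          OF pl _ sumq] p_le p_nonneg by (auto intro: always_eventually)
    then have t: "(\<lambda>n. \<Sum>i. p i n) \<longlonglongrightarrow> 0" by simp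
    show ?thesis
    proof (rule tendsto_sandwich[OF _ _ tendsto_const t])
      show "\<forall>\<^sub>F n in sequentially. 0 \<le> measure M (B n)" by simp
      show "\<forall>\<^sub>F n in sequentially. measure M (B n) \<le> (\<Sum>i. p i n)"
        using B_le by (auto simp: eventually_sequentially)
    qed
  qed
  have lower: "measure M (B n) \<ge> \<epsilon> n" if n1: "n \<ge> 1" for n
  proof (cases "n < N0")
    case True
    then show ?thesis using epos[OF n1] prob_space spU unfolding B_def by simp
  next
    case False
    have en: "0 < \<epsilon> n" using epos[OF n1] by simp
    obtain j where "(1/2::real)^j < \<epsilon> n" using real_arch_pow_inv[OF en, of "1/2"] by auto
    moreover have "q j \<le> (1/2)^j" unfolding q_def by (rule power_decreasing) auto
    ultimately have ex: "q j < \<epsilon> n" by linarith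
    define i where "i = (LEAST i. q i < \<epsilon> n)"
    have qi: "q i < \<epsilon> n" unfolding i_def using ex by (rule LeastI)
    have e2: "\<epsilon> n \<le> 2 * q i"
    proof (cases i)
      case 0 then show ?thesis using N0(1)[of n] False unfolding q_def by simp
    next
      case (Suc j)
      have "\<not> q j < \<epsilon> n" using not_less_Least[of j "\<lambda>i. q i < \<epsilon> n"] Suc i_def by simp
      moreover have "q j = 2 * q i" unfolding q_def Suc by simp
      ultimately show ?thesis by simp
    qed
    have nL: "n < L i" using L[of i n] qi by (meson not_le)
    have "p i 0 \<le> p i n + n * measure M (A i)"
      using E.Stay_steps[OF A(1)[of i], of "k i" n] unfolding p_def by simp
    moreover have "n * measure M (A i) \<le> n * \<delta> i" using A(3)[of i] by (simp add: mult_left_mono)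
    moreover have "n * \<delta> i \<le> q i"
    proof -
      have "n * \<delta> i = q i * (n / (real (L i) + 1))" unfolding \<delta>_def by simp
      also have "\<dots> \<le> q i * 1" using nL qpos[of i] by (intro mult_left_mono) auto
      finally show ?thesis by simp
    qed
    moreover have "3 * q i \<le> p i 0" using k(1)[of i] unfolding p_def by simp
    ultimately have "\<epsilon> n \<le> p i n" using e2 by linarith
    also have "p i n = measure M (Bi i n)" using Bi_meas by simp
    also have "\<dots> \<le> measure M (B n)" unfolding B_def using False Bi_sets
      by (auto intro!: finite_measure_mono)
    finally show ?thesis .
  qed
  have ae: "AE x in M. finite {n. n \<ge> 1 \<and> (T ^^ n) x \<in> B n}"
  proof -
    have bc: "AE x in M. eventually (\<lambda>i. x \<in> space M - E.Stay (A i) (k i)) sequentially"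
    proof (rule borel_cantelli_AE1)
      show "\<And>i. E.Stay (A i) (k i) \<in> sets M" using E.Stay_sets[OF A(1)] .
      show "\<And>i. emeasure M (E.Stay (A i) (k i)) < \<infinity>" by (simp add: less_top[symmetric])
      show "summable (\<lambda>i. measure M (E.Stay (A i) (k i)))"
        using sumq by (rule summable_comparison_test') (use p_le[of _ 0] p_nonneg in \<open>auto simp: p_def\<close>)
    qed
    have al: "AE x in M. \<forall>i. \<exists>m. x \<notin> E.Stay (A i) m"
      using E.Stay_null(2)[OF A(1) A(2)] by (simp add: AE_all_countable)
    show ?thesis using bc al
    proof (eventually_elim)
      case (elim x)
      obtain I where I: "\<And>i. i \<ge> I \<Longrightarrow> x \<notin> E.Stay (A i) (k i)"
        using elim(1) spU by (auto simp: eventually_sequentially)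
      obtain m where m: "\<And>i. x \<notin> E.Stay (A i) (m i)" using elim(2) by metis
      have "{n. n \<ge> 1 \<and> (T ^^ n) x \<in> B n} \<subseteq> {..< N0 + (\<Sum>i<I. m i)}"
      proof
        fix n assume n: "n \<in> {n. n \<ge> 1 \<and> (T ^^ n) x \<in> B n}"
        show "n \<in> {..< N0 + (\<Sum>i<I. m i)}"
        proof (cases "n < N0")
          case True then show ?thesis by simp
        next
          case False
          then obtain i where "(T^^n) x \<in> Bi i n" using n unfolding B_def by auto
          then have xs: "x \<in> E.Stay (A i) (k i + n)" unfolding Bi_def using SnTn by simp
          then have "x \<in> E.Stay (A i) (k i)" using E.Stay_mono[of "k i" "k i + n"] by auto
          then have iI: "i < I" using I by (meson not_le)
          have "k i + n < m i" using xs m[of i] E.Stay_mono[of "m i" "k i + n"] by (meson not_le subsetD)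
          moreover have "m i \<le> (\<Sum>i<I. m i)" using iI by (intro member_le_sum) auto
          ultimately show ?thesis by simp
        qed
      qed
      then show ?case by (rule finite_subset) simp
    qed
  qed
  show ?thesis
    by (intro exI[of _ B] conjI allI impI B_sets B_dec lim lower ae)
qed

end
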